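(* If a graph $G$ admits a star NeS model, then it admits a star NeS model $(\mathcal{T},(T_v)_{v\in V(G)})$ such that, with $c$ the center of the star $\mathcal{T}$, the set $\{v\in V(G): c\in T_v\}$ is a maximal clique of $G$.
   Context: An embedding tree $\mathcal{T}$ is a tree embedded in the Euclidean plane: each edge is a straight line segment of positive length, segments meet only at common endpoints, and $\mathcal{T}$ is regarded as the set of all points on its segments; $d_{\mathcal{T}}(x,y)$ is the length of the unique path in $\mathcal{T}$ between points $x,y$. A neighborhood subtree of $\mathcal{T}$ with center $c\in\mathcal{T}$ and non-negative rational radius $w$ is $\{p\in\mathcal{T}: d_{\mathcal{T}}(p,c)\le w\}$. A NeS model of a graph $G$ is a pair $(\mathcal{T},(T_v)_{v\in V(G)})$ where each $T_v$ is a neighborhood subtree of $\mathcal{T}$ and for all distinct $u,v$, $uv\in E(G)$ iff $T_u\cap T_v\neq\emptyset$. A star NeS model is a NeS model in which $\mathcal{T}$ is (the embedding of) a star, i.e. a union of line segments $L_1,\dots,L_\beta$ sharing one common endpoint $c$ (the center) and otherwise disjoint. *)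

theory Defs
  imports "HOL-Analysis.Analysis"
begin

definition simple_graph :: "'v set \<Rightarrow> ('v \<Rightarrow> 'v \<Rightarrow> bool) \<Rightarrow> bool" where
  "simple_graph V E \<longleftrightarrow> finite V \<and> (\<forall>u v. E u v \<longrightarrow> u \<in> V \<and> v \<in> V)
     \<and> (\<forall>u v. E u v \<longrightarrow> E v u) \<and> (\<forall>v. \<not> E v v)"

definition is_clique :: "'v set \<Rightarrow> ('v \<Rightarrow> 'v \<Rightarrow> bool) \<Rightarrow> 'v set \<Rightarrow> bool" where
  "is_clique V E K \<longleftrightarrow> K \<subseteq> V \<and> (\<forall>u\<in>K. \<forall>v\<in>K. u \<noteq> v \<longrightarrow> E u v)"

definition is_maximal_clique :: "'v set \<Rightarrow> ('v \<Rightarrow> 'v \<Rightarrow> bool) \<Rightarrow> 'v set \<Rightarrow> bool" where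
  "is_maximal_clique V E K \<longleftrightarrow> is_clique V E K \<and> (\<forall>K'. is_clique V E K' \<and> K \<subseteq> K' \<longrightarrow> K' = K)"

text \<open>Embedded star in the plane (plane = complex): center c, finite nonempty set P of
  leaf endpoints; segments [c,p] have positive length and pairwise meet only in c.\<close>
definition is_star :: "complex \<Rightarrow> complex set \<Rightarrow> bool" where
  "is_star c P \<longleftrightarrow> finite P \<and> P \<noteq> {} \<and> c \<notin> P \<and>
     (\<forall>p\<in>P. \<forall>q\<in>P. p \<noteq> q \<longrightarrow> closed_segment c p \<inter> closed_segment c q = {c})"

definition star_set :: "complex \<Rightarrow> complex set \<Rightarrow> complex set" where
  "star_set c P = (\<Union>p\<in>P. closed_segment c p)"

text \<open>Length of the unique path in the star between two of its points: along a common
  segment if both lie on one, otherwise through the center.\<close>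
definition star_dist :: "complex \<Rightarrow> complex set \<Rightarrow> complex \<Rightarrow> complex \<Rightarrow> real" where
  "star_dist c P x y =
     (if \<exists>p\<in>P. x \<in> closed_segment c p \<and> y \<in> closed_segment c p then dist x y
      else dist x c + dist c y)"

definition star_nbhd :: "complex \<Rightarrow> complex set \<Rightarrow> complex \<Rightarrow> real \<Rightarrow> complex set" where
  "star_nbhd c P a w = {x \<in> star_set c P. star_dist c P x a \<le> w}"

definition is_nbhd_subtree :: "complex \<Rightarrow> complex set \<Rightarrow> complex set \<Rightarrow> bool" where
  "is_nbhd_subtree c P S \<longleftrightarrow>
     (\<exists>a w. a \<in> star_set c P \<and> w \<in> \<rat> \<and> 0 \<le> w \<and> S = star_nbhd c P a w)"

definition star_nes_model ::
  "'v set \<Rightarrow> ('v \<Rightarrow> 'v \<Rightarrow> bool) \<Rightarrow> complex \<Rightarrow> complex set \<Rightarrow> ('v \<Rightarrow> complex set) \<Rightarrow> bool" where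
  "star_nes_model V E c P T \<longleftrightarrow> is_star c P \<and>
     (\<forall>v\<in>V. is_nbhd_subtree c P (T v)) \<and>
     (\<forall>u\<in>V. \<forall>v\<in>V. u \<noteq> v \<longrightarrow> (E u v \<longleftrightarrow> T u \<inter> T v \<noteq> {}))"

end

theory Submission imports Defs begin

lemma seg_dist:
  fixes c p x y :: complex
  assumes "x \<in> closed_segment c p" "y \<in> closed_segment c p"
  shows "dist x y = \<bar>dist x c - dist y c\<bar>"
proof -
  obtain a where a: "0 \<le> a" "a \<le> 1" "x = (1 - a) *\<^sub>R c + a *\<^sub>R p" using assms(1) by (auto simp: in_segment)
  obtain b where b: "0 \<le> b" "b \<le> 1" "y = (1 - b) *\<^sub>R c + b *\<^sub>R p" using assms(2) by (auto simp: in_segment)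
  have x: "x - c = a *\<^sub>R (p - c)" using a(3) by (simp add: algebra_simps)
  have y: "y - c = b *\<^sub>R (p - c)" using b(3) by (simp add: algebra_simps)
  have "x - y = (x - c) - (y - c)" by simp
  then have xy: "x - y = (a - b) *\<^sub>R (p - c)" using x y by (simp add: scaleR_diff_left)
  have "dist x y = \<bar>a - b\<bar> * norm (p - c)" by (simp add: dist_norm xy)
  moreover have "dist x c = a * norm (p - c)" using a(1) by (simp add: dist_norm x)
  moreover have "dist y c = b * norm (p - c)" using b(1) by (simp add: dist_norm y)
  ultimately show ?thesis by (simp add: abs_mult left_diff_distrib[symmetric])
qed

lemma seg_unique:
  assumes "is_star c P" "p \<in> P" "q \<in> P" "x \<in> closed_segment c p" "x \<in> closed_segment c q" "x \<noteq> c"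
  shows "p = q"
  using assms unfolding is_star_def by blast

lemma SD:
  assumes st: "is_star c P" and pq: "p \<in> P" "q \<in> P"
    and x: "x \<in> closed_segment c p" and y: "y \<in> closed_segment c q"
  shows "star_dist c P x y = (if p = q then \<bar>dist x c - dist y c\<bar> else dist x c + dist y c)"
proof (cases "p = q")
  case True
  have "\<exists>r\<in>P. x \<in> closed_segment c r \<and> y \<in> closed_segment c r" using True pq x y by blast
  then have "star_dist c P x y = dist x y" unfolding star_dist_def by (rule if_P)
  also have "\<dots> = \<bar>dist x c - dist y c\<bar>" using seg_dist[OF x] y True by blast
  finally show ?thesis using True by simp
next
  case False
  show ?thesis
  proof (cases "\<exists>r\<in>P. x \<in> closed_segment c r \<and> y \<in> closed_segment c r")
    case True
    then obtain r where r: "r \<in> P" "x \<in> closed_segment c r" "y \<in> closed_segment c r" by blast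
    have xy: "x = c \<or> y = c" using seg_unique[OF st pq(1) r(1) x r(2)] seg_unique[OF st pq(2) r(1) y r(3)] False by blast
    have e1: "star_dist c P x y = dist x y" unfolding star_dist_def using True by (rule if_P)
    have e2: "dist x y = dist x c + dist y c" using xy
    proof
      assume "x = c" then show ?thesis by (simp add: dist_commute)
    next
      assume "y = c" then show ?thesis by simp
    qed
    show ?thesis using e1 e2 False by simp
  next
    case F: False
    have "star_dist c P x y = dist x c + dist c y" unfolding star_dist_def using F by (rule if_not_P)
    then show ?thesis using False by (simp add: dist_commute)
  qed
qed

lemma star_set_seg: "x \<in> star_set c P \<Longrightarrow> \<exists>q\<in>P. x \<in> closed_segment c q"
  unfolding star_set_def by auto

lemma memball:
  assumes st: "is_star c P" and pq: "p \<in> P" "q \<in> P"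
    and a: "a \<in> closed_segment c p" and x: "x \<in> closed_segment c q"
  shows "x \<in> star_nbhd c P a w \<longleftrightarrow> (if q = p then \<bar>dist x c - dist a c\<bar> else dist x c + dist a c) \<le> w"
proof -
  have "x \<in> star_set c P" using x pq unfolding star_set_def by auto
  then show ?thesis unfolding star_nbhd_def using SD[OF st pq(2) pq(1) x a] by auto
qed

lemma step:
  fixes V :: "'v set" and E :: "'v \<Rightarrow> 'v \<Rightarrow> bool"
  assumes sg: "simple_graph V E" and M: "star_nes_model V E c P T"
    and nm: "\<not> is_maximal_clique V E {v\<in>V. c \<in> T v}"
  shows "\<exists>u\<in>V. c \<notin> T u \<and> (\<exists>S. c \<in> S \<and> star_nes_model V E c P (T(u:=S)))"
proof -
  have st: "is_star c P" and nb: "\<forall>v\<in>V. is_nbhd_subtree c P (T v)"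
    and ed: "\<forall>u\<in>V. \<forall>v\<in>V. u \<noteq> v \<longrightarrow> (E u v \<longleftrightarrow> T u \<inter> T v \<noteq> {})"
    using M unfolding star_nes_model_def by auto
  have finV: "finite V" using sg unfolding simple_graph_def by auto
  have cP: "c \<notin> P" using st unfolding is_star_def by auto
  define K where "K = {v\<in>V. c \<in> T v}"
  have Kcl: "is_clique V E K" unfolding is_clique_def K_def using ed by auto
  then obtain K' where K': "is_clique V E K'" "K \<subseteq> K'" "K' \<noteq> K"
    using nm unfolding is_maximal_clique_def K_def by auto
  then obtain v0 where v0: "v0 \<in> K'" "v0 \<notin> K" by blast
  define U where "U = {v\<in>V. c \<notin> T v \<and> (\<forall>k\<in>K. T v \<inter> T k \<noteq> {})}"
  have v0U: "v0 \<in> U"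
  proof -
    have "v0 \<in> V" using v0 K' unfolding is_clique_def by auto
    moreover have "\<forall>k\<in>K. T v0 \<inter> T k \<noteq> {}"
    proof
      fix k assume k: "k \<in> K"
      then have "k \<in> K'" "k \<noteq> v0" "k \<in> V" using K' v0 unfolding K_def by auto
      then have "E v0 k" using K' v0 unfolding is_clique_def by auto
      then show "T v0 \<inter> T k \<noteq> {}" using ed \<open>v0 \<in> V\<close> \<open>k \<in> V\<close> \<open>k \<noteq> v0\<close> by auto
    qed
    ultimately show ?thesis using v0 unfolding U_def K_def by auto
  qed
  have "\<forall>v\<in>V. \<exists>a w. a \<in> star_set c P \<and> w \<in> \<rat> \<and> 0 \<le> w \<and> T v = star_nbhd c P a w"
    using nb unfolding is_nbhd_subtree_def by auto
  then obtain A where A: "\<forall>v\<in>V. \<exists>w. A v \<in> star_set c P \<and> w \<in> \<rat> \<and> 0 \<le> w \<and> T v = star_nbhd c P (A v) w"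
    using bchoice[of V "\<lambda>v a. \<exists>w. a \<in> star_set c P \<and> w \<in> \<rat> \<and> 0 \<le> w \<and> T v = star_nbhd c P a w"] by blast
  then obtain W where AW: "\<forall>v\<in>V. A v \<in> star_set c P \<and> W v \<in> \<rat> \<and> 0 \<le> W v \<and> T v = star_nbhd c P (A v) (W v)"
    using bchoice[of V "\<lambda>v w. A v \<in> star_set c P \<and> w \<in> \<rat> \<and> 0 \<le> w \<and> T v = star_nbhd c P (A v) w"] by blast
  have "\<forall>v\<in>V. \<exists>q. q \<in> P \<and> A v \<in> closed_segment c q" using AW star_set_seg by blast
  then obtain L where L: "\<forall>v\<in>V. L v \<in> P \<and> A v \<in> closed_segment c (L v)"
    using bchoice[of V "\<lambda>v q. q \<in> P \<and> A v \<in> closed_segment c q"] by blast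
  define l where "l v = dist (A v) c - W v" for v
  have memT: "z \<in> T v \<longleftrightarrow> (if q = L v then \<bar>dist z c - dist (A v) c\<bar> else dist z c + dist (A v) c) \<le> W v"
    if "v \<in> V" "q \<in> P" "z \<in> closed_segment c q" for v q z
    using memball[OF st, of "L v" q "A v" z "W v"] L AW that by auto
  have cT: "c \<in> T v \<longleftrightarrow> dist (A v) c \<le> W v" if "v \<in> V" for v
    using memT[OF that, of "L v" c] L that by auto
  have finU: "finite U" using finV unfolding U_def by auto
  have "U \<noteq> {}" using v0U by auto
  then have "Min (l ` U) \<in> l ` U" using finU by simp
  then obtain u where uU: "u \<in> U" and ueq: "l u = Min (l ` U)" by auto
  have umin: "\<forall>v\<in>U. l u \<le> l v" unfolding ueq using finU by (intro ballI Min_le) auto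
  have uV: "u \<in> V" and cu: "c \<notin> T u" and uK: "\<forall>k\<in>K. T u \<inter> T k \<noteq> {}" using uU unfolding U_def by auto
  define pi where "pi = L u"
  define t where "t = dist (A u) c"
  define R where "R = t + W u"
  have piP: "pi \<in> P" and Au: "A u \<in> closed_segment c pi" using L uV unfolding pi_def by auto
  have tW: "W u < t" using cT[OF uV] cu unfolding t_def by auto
  have W0: "0 \<le> W u" using AW uV by auto
  have tle: "t \<le> dist pi c" using Au unfolding t_def
    by (metis dist_commute dist_in_closed_segment)
  define N where "N = {v\<in>V. c \<notin> T v}"
  have lpos: "l v > 0" if "v \<in> N" for v
  proof -
    have "v \<in> V" "c \<notin> T v" using that unfolding N_def by auto
    then have "W v < dist (A v) c" using cT by auto
    then show ?thesis unfolding l_def by simp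
  qed
  define \<delta> where "\<delta> = Min (l ` N)"
  have finN: "finite N" using finV unfolding N_def by auto
  have uN: "u \<in> N" using uV cu unfolding N_def by auto
  have "\<delta> \<in> l ` N" unfolding \<delta>_def using finN uN by (intro Min_in) auto
  then have dpos: "\<delta> > 0" using lpos by auto
  have dle: "\<delta> \<le> l v" if "v \<in> N" for v unfolding \<delta>_def using finN that by (intro Min_le) auto
  define m where "m = min \<delta> R / 2"
  have mpos: "m > 0" unfolding m_def R_def using dpos tW W0 by auto
  obtain w' where w'Q: "w' \<in> \<rat>" and w'1: "R / 2 < w'" and w'2: "w' < R / 2 + m"
    using Rats_dense_in_real[of "R/2" "R/2 + m"] mpos by auto
  define t' where "t' = R - w'"
  have t'0: "0 < t'" using w'2 mpos unfolding t'_def m_def by auto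
  have t'le: "t' < t" using w'1 tW unfolding t'_def R_def by auto
  have eps: "w' - t' < \<delta>" using w'2 unfolding t'_def m_def by auto
  have pc: "dist pi c > 0" using piP cP by auto
  define a' where "a' = c + (t' / dist pi c) *\<^sub>R (pi - c)"
  have a'seg: "a' \<in> closed_segment c pi"
  proof -
    have "a' = (1 - t' / dist pi c) *\<^sub>R c + (t' / dist pi c) *\<^sub>R pi" unfolding a'_def
      by (simp add: algebra_simps)
    moreover have "0 \<le> t' / dist pi c" "t' / dist pi c \<le> 1" using t'0 t'le tle pc by auto
    ultimately show ?thesis unfolding in_segment by blast
  qed
  have da': "dist a' c = t'"
  proof -
    have "dist a' c = \<bar>t' / dist pi c\<bar> * norm (pi - c)" unfolding a'_def by (simp add: dist_norm)
    then show ?thesis using t'0 pc by (simp add: dist_norm)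
  qed
  define S where "S = star_nbhd c P a' w'"
  have memS: "z \<in> S \<longleftrightarrow> (if q = pi then \<bar>dist z c - t'\<bar> else dist z c + t') \<le> w'"
    if "q \<in> P" "z \<in> closed_segment c q" for q z
    using memball[OF st piP that(1) a'seg that(2), of w'] da' unfolding S_def by auto
  have cS: "c \<in> S" using memS[OF piP, of c] t'0 w'1 unfolding t'_def by auto
  have Tu_leg: "z \<in> closed_segment c pi \<and> l u \<le> dist z c \<and> dist z c \<le> R" if "z \<in> T u" for z
  proof -
    have "z \<in> star_set c P" using that AW uV unfolding star_nbhd_def by auto
    then obtain q where q: "q \<in> P" "z \<in> closed_segment c q" using star_set_seg by metis
    have m1: "(if q = pi then \<bar>dist z c - t\<bar> else dist z c + t) \<le> W u"
      using memT[OF uV q] that unfolding pi_def t_def by auto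
    have "q = pi"
    proof (rule ccontr)
      assume "q \<noteq> pi" then have "dist z c + t \<le> W u" using m1 by simp
      then show False using tW zero_le_dist[of z c] by linarith
    qed
    then show ?thesis using q m1 unfolding l_def t_def R_def by auto
  qed
  have Tu_in: "z \<in> T u" if "z \<in> closed_segment c pi" "l u \<le> dist z c" "dist z c \<le> R" for z
    using memT[OF uV piP that(1)] that unfolding pi_def l_def R_def t_def by auto
  have TuS: "T u \<subseteq> S"
  proof
    fix z assume "z \<in> T u"
    then have z: "z \<in> closed_segment c pi" "dist z c \<le> R" using Tu_leg by auto
    have "\<bar>dist z c - t'\<bar> \<le> w'" unfolding abs_le_iff
      using z(2) t'0 w'1 zero_le_dist[of z c] unfolding t'_def by linarith
    then show "z \<in> S" using memS[OF piP z(1)] by simp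
  qed
  have key: "S \<inter> T v \<noteq> {} \<longleftrightarrow> T u \<inter> T v \<noteq> {}" if vV: "v \<in> V" "v \<noteq> u" for v
  proof
    assume "T u \<inter> T v \<noteq> {}" then show "S \<inter> T v \<noteq> {}" using TuS by auto
  next
    assume "S \<inter> T v \<noteq> {}"
    then obtain x where xS: "x \<in> S" and xT: "x \<in> T v" by auto
    show "T u \<inter> T v \<noteq> {}"
    proof (cases "c \<in> T v")
      case True
      then show ?thesis using uK vV unfolding K_def by auto
    next
      case cv: False
      have lv: "0 < l v" using lpos vV cv unfolding N_def by auto
      have dlv: "\<delta> \<le> l v" using dle vV cv unfolding N_def by auto
      have "x \<in> star_set c P" using xT AW vV unfolding star_nbhd_def by auto
      then obtain q where q: "q \<in> P" "x \<in> closed_segment c q" using star_set_seg by metis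
      have m1: "(if q = L v then \<bar>dist x c - dist (A v) c\<bar> else dist x c + dist (A v) c) \<le> W v"
        using memT[OF vV(1) q] xT by auto
      have tv: "W v < dist (A v) c" using cT[OF vV(1)] cv by auto
      have qv: "q = L v"
      proof (rule ccontr)
        assume "q \<noteq> L v" then have "dist x c + dist (A v) c \<le> W v" using m1 by simp
        then show False using tv zero_le_dist[of x c] by linarith
      qed
      have xl: "l v \<le> dist x c" using m1 qv unfolding l_def by auto
      have m2: "(if q = pi then \<bar>dist x c - t'\<bar> else dist x c + t') \<le> w'" using memS[OF q] xS by auto
      have qpi: "q = pi"
      proof (rule ccontr)
        assume "q \<noteq> pi"
        then have "dist x c \<le> w' - t'" using m2 by auto
        then show False using eps dlv xl by auto
      qed
      have xR: "dist x c \<le> R" using m2 qpi unfolding t'_def by auto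
      show ?thesis
      proof (rule ccontr)
        assume dis: "\<not> T u \<inter> T v \<noteq> {}"
        have xlu: "dist x c < l u"
        proof (rule ccontr)
          assume "\<not> dist x c < l u"
          then have "x \<in> T u" using Tu_in q(2) qpi xR by auto
          then show False using dis xT by auto
        qed
        have "v \<in> U"
        proof -
          have "T v \<inter> T k \<noteq> {}" if kK: "k \<in> K" for k
          proof -
            have kV: "k \<in> V" and ck: "c \<in> T k" using kK unfolding K_def by auto
            obtain y where yu: "y \<in> T u" and yk: "y \<in> T k" using uK kK by auto
            have y: "y \<in> closed_segment c pi" "l u \<le> dist y c" using Tu_leg yu by auto
            have tk: "dist (A k) c \<le> W k" using cT[OF kV] ck by auto
            have my: "(if pi = L k then \<bar>dist y c - dist (A k) c\<bar> else dist y c + dist (A k) c) \<le> W k"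
              using memT[OF kV piP y(1)] yk by auto
            have "(if pi = L k then \<bar>dist x c - dist (A k) c\<bar> else dist x c + dist (A k) c) \<le> W k"
            proof (cases "pi = L k")
              case True
              then have "\<bar>dist y c - dist (A k) c\<bar> \<le> W k" using my by simp
              then have "\<bar>dist x c - dist (A k) c\<bar> \<le> W k" using tk xlu y(2) zero_le_dist[of x c]
                unfolding abs_le_iff by linarith
              then show ?thesis using True by simp
            next
              case False
              then have "dist y c + dist (A k) c \<le> W k" using my by simp
              then have "dist x c + dist (A k) c \<le> W k" using xlu y(2) by linarith
              then show ?thesis using False by simp
            qed
            then have "x \<in> T k" using memT[OF kV piP] q(2) qpi by auto
            then show ?thesis using xT by auto
          qed
          then show ?thesis using vV cv unfolding U_def by auto
        qed
        then have "l u \<le> l v" using umin by auto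
        then show False using xlu xl by auto
      qed
    qed
  qed
  have "star_nes_model V E c P (T(u:=S))"
    unfolding star_nes_model_def
  proof (intro conjI ballI impI)
    show "is_star c P" by (rule st)
  next
    fix v assume "v \<in> V"
    show "is_nbhd_subtree c P ((T(u := S)) v)"
    proof (cases "v = u")
      case True
      have "a' \<in> star_set c P" using a'seg piP unfolding star_set_def by auto
      moreover have "0 \<le> w'" using w'1 t'0 unfolding t'_def by auto
      moreover have "(T(u:=S)) v = star_nbhd c P a' w'" using True unfolding S_def by simp
      ultimately show ?thesis unfolding is_nbhd_subtree_def using w'Q by blast
    next
      case False
      then have "(T(u:=S)) v = T v" by simp
      then show ?thesis using nb \<open>v \<in> V\<close> by simp
    qed
  next
    fix x y assume xy: "x \<in> V" "y \<in> V" "x \<noteq> y"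
    have edxy: "E x y \<longleftrightarrow> T x \<inter> T y \<noteq> {}" using ed xy by blast
    show "E x y \<longleftrightarrow> (T(u := S)) x \<inter> (T(u := S)) y \<noteq> {}"
    proof (cases "x = u")
      case True
      then have "y \<noteq> u" using xy by blast
      have "S \<inter> T y \<noteq> {} \<longleftrightarrow> T u \<inter> T y \<noteq> {}" by (rule key[OF xy(2) \<open>y \<noteq> u\<close>])
      then show ?thesis using edxy True \<open>y \<noteq> u\<close> by simp
    next
      case False
      show ?thesis
      proof (cases "y = u")
        case True
        have "S \<inter> T x \<noteq> {} \<longleftrightarrow> T u \<inter> T x \<noteq> {}" by (rule key[OF xy(1) False])
        then show ?thesis using edxy True False by (simp add: Int_commute)
      next
        case False2: False
        then show ?thesis using edxy False by simp
      qed
    qed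
  qed
  then have ex: "\<exists>S'. c \<in> S' \<and> star_nes_model V E c P (T(u:=S'))" using cS by (intro exI[of _ S]) simp
  show ?thesis
    by (rule bexI[of _ u]) (use uV cu ex in simp_all)
qed


theorem claim1:
  fixes V :: "'v set" and E :: "'v \<Rightarrow> 'v \<Rightarrow> bool"
  assumes "simple_graph V E"
    and "\<exists>c P T. star_nes_model V E c P T"
  shows "\<exists>c P T. star_nes_model V E c P T \<and> is_maximal_clique V E {v \<in> V. c \<in> T v}"
proof -
  obtain c P T0 where M0: "star_nes_model V E c P T0" using assms(2) by blast
  have finV: "finite V" using assms(1) unfolding simple_graph_def by auto
  have main: "\<forall>T. star_nes_model V E c P T \<longrightarrow> card {v\<in>V. c \<notin> T v} = n \<longrightarrow>
      (\<exists>T. star_nes_model V E c P T \<and> is_maximal_clique V E {v\<in>V. c \<in> T v})" for n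
  proof (induction n rule: less_induct)
    case (less n)
    show ?case
    proof (intro allI impI)
      fix T assume M: "star_nes_model V E c P T" and n: "card {v\<in>V. c \<notin> T v} = n"
      show "\<exists>T. star_nes_model V E c P T \<and> is_maximal_clique V E {v\<in>V. c \<in> T v}"
      proof (cases "is_maximal_clique V E {v\<in>V. c \<in> T v}")
        case True then show ?thesis using M by blast
      next
        case False
        from step[OF assms(1) M False] obtain u where u0: "u \<in> V" "c \<notin> T u"
          and "\<exists>S. c \<in> S \<and> star_nes_model V E c P (T(u:=S))" by blast
        then obtain S where "c \<in> S" and M': "star_nes_model V E c P (T(u:=S))" by blast
        with u0 have u: "u \<in> V" "c \<notin> T u" "c \<in> S" by auto
        have eq: "{v\<in>V. c \<notin> (T(u:=S)) v} = {v\<in>V. c \<notin> T v} - {u}" using u by auto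
        have "card ({v\<in>V. c \<notin> T v} - {u}) < card {v\<in>V. c \<notin> T v}"
          using finV u by (intro card_Diff1_less) auto
        then have "card {v\<in>V. c \<notin> (T(u:=S)) v} < n" using eq n by simp
        from less.IH[rule_format, OF this M' refl] show ?thesis .
      qed
    qed
  qed
  from main[rule_format, OF M0 refl] show ?thesis by blast
qed

end
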